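(* Assume $(d,q)=(2,2)$. The third-order term of the Taylor expansion of $f(\bm{x})$ around the mode $\bm{x}=\bm{\theta}$ is either: (i) $0$ identically, in which case the asymptotic bias (AB) is equal to zero with an arbitrary $\mathrm{Q}$; (ii) of the form $\prod_{i=1}^3\bm{a}_i^\top(\bm{x}-\bm{\theta})$ with $\bm{a}_1,\bm{a}_2,\bm{a}_3$, any two of which are linearly independent, in which case there is a choice of $\mathrm{Q}$ with which the AB is equal to zero; (iii) neither identically $0$ nor of the form described in (ii), in which case the AB cannot be made equal to zero by any choice of $\mathrm{Q}$.
   Context: Let $f$ be a probability density function on $\mathbb{R}^d$ with unique mode $\bm{\theta}$ and non-singular Hessian $Hf(\bm{\theta})$, and let $\mathrm{A}=\{Hf(\bm{\theta})\}^{-1}$. The kernel mode estimator $\bm{\theta}_n$ (maximizer of a kernel density estimate with bandwidth $h_n$) uses an elliptic kernel $K_\mathrm{P}(\bm{x})=K(\mathrm{P}\bm{x})$, where $K(\cdot)=G(\|\cdot\|)$ is a $q$-th order radial-basis kernel and $\mathrm{P}$ is a $d\times d$ matrix with $|\det\mathrm{P}|=1$; let $\mathrm{Q}=\mathrm{P}^{-1}\mathrm{P}^{-\top}$ (positive definite). The asymptotic bias (AB) of $\bm{\theta}_n$ is $\mathrm{E}[\bm{\theta}_n-\bm{\theta}]\approx -\frac{\pi^{d/2}h_n^q}{2^{q-1}\Gamma(\frac{d+q}{2})\Gamma(\frac{q}{2}+1)}B_{d,q}(G)\,\mathrm{A}\,\nabla(\nabla^\top\mathrm{Q}\nabla)^{q/2}f(\bm{\theta})$,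 with $B_{d,q}(G)=\int_0^\infty x^{d-1+q}G(x)\,dx\neq 0$, so the AB vanishes iff $\nabla(\nabla^\top\mathrm{Q}\nabla)^{q/2}f(\bm{\theta})=\bm{0}_d$. *)

theory Defs
  imports "HOL-Analysis.Analysis"
begin

definition partial :: "2 \<Rightarrow> (real^2 \<Rightarrow> real) \<Rightarrow> real^2 \<Rightarrow> real" where
  "partial i g x = deriv (\<lambda>t. g (x + t *\<^sub>R axis i 1)) 0"

definition C1 :: "(real^2 \<Rightarrow> real) \<Rightarrow> bool" where
  "C1 g \<longleftrightarrow> continuous_on UNIV g \<and>
     (\<forall>i x. (\<lambda>t. g (x + t *\<^sub>R axis i 1)) differentiable (at 0)) \<and>
     (\<forall>i. continuous_on UNIV (partial i g))"

definition C3 :: "(real^2 \<Rightarrow> real) \<Rightarrow> bool" where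
  "C3 g \<longleftrightarrow> C1 g \<and> (\<forall>i. C1 (partial i g)) \<and> (\<forall>i j. C1 (partial i (partial j g)))"

definition hess :: "(real^2 \<Rightarrow> real) \<Rightarrow> real^2 \<Rightarrow> real^2^2" where
  "hess g x = (\<chi> i j. partial i (partial j g) x)"

definition taylor3 :: "(real^2 \<Rightarrow> real) \<Rightarrow> real^2 \<Rightarrow> real^2 \<Rightarrow> real" where
  "taylor3 g th x = (1/6) * (\<Sum>i\<in>UNIV. \<Sum>j\<in>UNIV. \<Sum>k\<in>UNIV.
      partial i (partial j (partial k g)) th * (x - th)$i * (x - th)$j * (x - th)$k)"

definition Qmat :: "real^2^2 \<Rightarrow> real^2^2" where
  "Qmat P = matrix_inv P ** transpose (matrix_inv P)"

text \<open>The vector nabla (nabla^T Q nabla)^{q/2} f (th) for q = 2.\<close>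
definition grad_QLap :: "real^2^2 \<Rightarrow> (real^2 \<Rightarrow> real) \<Rightarrow> real^2 \<Rightarrow> real^2" where
  "grad_QLap Q g th = (\<chi> k. \<Sum>i\<in>UNIV. \<Sum>j\<in>UNIV. Q$i$j * partial k (partial i (partial j g)) th)"

definition Bdq :: "nat \<Rightarrow> nat \<Rightarrow> (real \<Rightarrow> real) \<Rightarrow> real" where
  "Bdq d q G = integral {0..} (\<lambda>x. x ^ (d - 1 + q) * G x)"

text \<open>Asymptotic bias of the kernel mode estimator for (d,q) = (2,2),
  bandwidth h, radial profile G and kernel matrix P.\<close>
definition AB :: "(real^2 \<Rightarrow> real) \<Rightarrow> real^2 \<Rightarrow> (real \<Rightarrow> real) \<Rightarrow> real \<Rightarrow> real^2^2 \<Rightarrow> real^2" where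
  "AB f th G h P =
     (let d = (2::nat); q = (2::nat);
          c = - (pi powr (real d / 2) * h ^ q /
                 (2 powr (real q - 1) * Gamma ((real d + real q) / 2) * Gamma (real q / 2 + 1)))
     in (c * Bdq d q G) *\<^sub>R (matrix_inv (hess f th) *v grad_QLap (Qmat P) f th))"

definition lin_indep2 :: "real^2 \<Rightarrow> real^2 \<Rightarrow> bool" where
  "lin_indep2 a b \<longleftrightarrow> a \<noteq> b \<and> independent {a, b}"

end

theory Submission
  imports Defs
begin


definition dd :: "real^2 \<Rightarrow> (real^2 \<Rightarrow> real) \<Rightarrow> real^2 \<Rightarrow> real" where
  "dd v g x = deriv (\<lambda>t. g (x + t *\<^sub>R v)) 0"

lemma partial_dd: "partial i = dd (axis i 1)"
  by (intro ext) (simp add: partial_def dd_def)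

lemma dir_deriv:
  assumes "\<forall>y. (\<lambda>t. g (y + t *\<^sub>R v)) differentiable (at 0)"
  shows "((\<lambda>t. g (x + t *\<^sub>R v)) has_real_derivative dd v g (x + s *\<^sub>R v)) (at s)"
proof -
  have "((\<lambda>t. g ((x + s *\<^sub>R v) + t *\<^sub>R v)) has_real_derivative dd v g (x + s *\<^sub>R v)) (at 0)"
    using assms DERIV_deriv_iff_real_differentiable unfolding dd_def by blast
  then have "((\<lambda>t. g (x + (t + s) *\<^sub>R v)) has_real_derivative dd v g (x + s *\<^sub>R v)) (at 0)"
    by (simp add: scaleR_add_left algebra_simps)
  then show ?thesis using DERIV_shift[of "\<lambda>t. g (x + t *\<^sub>R v)" _ 0 s] by simp
qed

lemma schwarz_step:
  assumes du: "\<forall>y. (\<lambda>t. g (y + t *\<^sub>R u)) differentiable (at 0)"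
    and duv: "\<forall>y. (\<lambda>t. dd u g (y + t *\<^sub>R v)) differentiable (at 0)"
    and s: "0 < s"
  shows "\<exists>y. norm (y - x) \<le> s * (norm u + norm v) \<and>
    g (x + s *\<^sub>R u + s *\<^sub>R v) - g (x + s *\<^sub>R u) - g (x + s *\<^sub>R v) + g x = s^2 * dd v (dd u g) y"
proof -
  define \<phi> where "\<phi> \<sigma> = g ((x + s *\<^sub>R v) + \<sigma> *\<^sub>R u) - g (x + \<sigma> *\<^sub>R u)" for \<sigma>
  have der: "\<And>\<sigma>. 0 \<le> \<sigma> \<Longrightarrow> \<sigma> \<le> s \<Longrightarrow> (\<phi> has_real_derivative (dd u g ((x + s *\<^sub>R v) + \<sigma> *\<^sub>R u) - dd u g (x + \<sigma> *\<^sub>R u))) (at \<sigma>)"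
    unfolding \<phi>_def by (intro DERIV_diff dir_deriv[OF du])
  from MVT2[OF s der] obtain \<sigma> where \<sigma>: "0 < \<sigma>" "\<sigma> < s"
    "\<phi> s - \<phi> 0 = (s - 0) * (dd u g ((x + s *\<^sub>R v) + \<sigma> *\<^sub>R u) - dd u g (x + \<sigma> *\<^sub>R u))"
    by blast
  define \<psi> where "\<psi> \<tau> = dd u g ((x + \<sigma> *\<^sub>R u) + \<tau> *\<^sub>R v)" for \<tau>
  have der2: "\<And>\<tau>. 0 \<le> \<tau> \<Longrightarrow> \<tau> \<le> s \<Longrightarrow> (\<psi> has_real_derivative dd v (dd u g) ((x + \<sigma> *\<^sub>R u) + \<tau> *\<^sub>R v)) (at \<tau>)"
    unfolding \<psi>_def by (intro dir_deriv[OF duv])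
  from MVT2[OF s der2] obtain \<tau> where \<tau>: "0 < \<tau>" "\<tau> < s"
    "\<psi> s - \<psi> 0 = (s - 0) * dd v (dd u g) ((x + \<sigma> *\<^sub>R u) + \<tau> *\<^sub>R v)"
    by blast
  define y where "y = (x + \<sigma> *\<^sub>R u) + \<tau> *\<^sub>R v"
  have "norm (y - x) \<le> norm (\<sigma> *\<^sub>R u) + norm (\<tau> *\<^sub>R v)"
    using norm_triangle_ineq[of "\<sigma> *\<^sub>R u" "\<tau> *\<^sub>R v"] unfolding y_def by (simp add: algebra_simps)
  also have "\<dots> = \<sigma> * norm u + \<tau> * norm v" using \<sigma> \<tau> by simp
  also have "\<dots> \<le> s * norm u + s * norm v"
    using \<sigma> \<tau> by (intro add_mono mult_right_mono) auto
  finally have n: "norm (y - x) \<le> s * (norm u + norm v)" by (simp add: algebra_simps)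
  have e1: "\<psi> s = dd u g ((x + s *\<^sub>R v) + \<sigma> *\<^sub>R u)" "\<psi> 0 = dd u g (x + \<sigma> *\<^sub>R u)"
    unfolding \<psi>_def by (simp_all add: algebra_simps)
  have e2: "\<phi> s - \<phi> 0 = g (x + s *\<^sub>R u + s *\<^sub>R v) - g (x + s *\<^sub>R u) - g (x + s *\<^sub>R v) + g x"
    unfolding \<phi>_def by (simp add: algebra_simps)
  show ?thesis
    apply (rule exI[of _ y])
    using n \<sigma>(3) \<tau>(3) e1 e2 unfolding y_def by (simp add: power2_eq_square)
qed

lemma schwarz:
  assumes du: "\<forall>y. (\<lambda>t. g (y + t *\<^sub>R u)) differentiable (at 0)"
    and dv: "\<forall>y. (\<lambda>t. g (y + t *\<^sub>R v)) differentiable (at 0)"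
    and duv: "\<forall>y. (\<lambda>t. dd u g (y + t *\<^sub>R v)) differentiable (at 0)"
    and dvu: "\<forall>y. (\<lambda>t. dd v g (y + t *\<^sub>R u)) differentiable (at 0)"
    and c1: "continuous_on UNIV (dd v (dd u g))"
    and c2: "continuous_on UNIV (dd u (dd v g))"
  shows "dd v (dd u g) x = dd u (dd v g) x"
proof (rule ccontr)
  define A where "A = dd v (dd u g) x"
  define B where "B = dd u (dd v g) x"
  assume "dd v (dd u g) x \<noteq> dd u (dd v g) x"
  then have AB: "A \<noteq> B" unfolding A_def B_def .
  define e where "e = \<bar>A - B\<bar> / 2"
  have e: "e > 0" using AB unfolding e_def by simp
  obtain d1 where d1: "d1 > 0" "\<And>y. dist y x < d1 \<Longrightarrow> dist (dd v (dd u g) y) A < e"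
    using c1 e unfolding continuous_on_iff A_def by blast
  obtain d2 where d2: "d2 > 0" "\<And>y. dist y x < d2 \<Longrightarrow> dist (dd u (dd v g) y) B < e"
    using c2 e unfolding continuous_on_iff B_def by blast
  define s where "s = min d1 d2 / (2 * (norm u + norm v + 1))"
  have npos: "norm u + norm v + 1 > 0" by (simp add: add_nonneg_pos)
  have s: "s > 0" unfolding s_def using d1 d2 npos by simp
  have sd: "s * (norm u + norm v) < min d1 d2"
  proof -
    have "s * (norm u + norm v) \<le> s * (norm u + norm v + 1)" using s by simp
    also have "\<dots> = min d1 d2 / 2" unfolding s_def using npos by (simp add: field_simps)
    also have "\<dots> < min d1 d2" using d1 d2 by (simp add: min_def)
    finally show ?thesis .
  qed
  obtain y1 where y1: "norm (y1 - x) \<le> s * (norm u + norm v)"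
    "g (x + s *\<^sub>R u + s *\<^sub>R v) - g (x + s *\<^sub>R u) - g (x + s *\<^sub>R v) + g x = s^2 * dd v (dd u g) y1"
    using schwarz_step[OF du duv s] by blast
  obtain y2 where y2: "norm (y2 - x) \<le> s * (norm v + norm u)"
    "g (x + s *\<^sub>R v + s *\<^sub>R u) - g (x + s *\<^sub>R v) - g (x + s *\<^sub>R u) + g x = s^2 * dd u (dd v g) y2"
    using schwarz_step[OF dv dvu s] by blast
  have "s^2 * dd v (dd u g) y1 = s^2 * dd u (dd v g) y2"
    using y1(2) y2(2) by (simp add: algebra_simps)
  then have eq: "dd v (dd u g) y1 = dd u (dd v g) y2" using s by simp
  have "dist y1 x < d1" using y1(1) sd by (simp add: dist_norm)
  then have h1: "\<bar>dd v (dd u g) y1 - A\<bar> < e" using d1(2) by (simp add: dist_real_def)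
  have "dist y2 x < d2" using y2(1) sd by (simp add: dist_norm add.commute)
  then have h2: "\<bar>dd u (dd v g) y2 - B\<bar> < e" using d2(2) by (simp add: dist_real_def)
  have gen: "\<And>X Y A B::real. \<bar>X - A\<bar> < \<bar>A - B\<bar> / 2 \<Longrightarrow> \<bar>Y - B\<bar> < \<bar>A - B\<bar> / 2 \<Longrightarrow> X = Y \<Longrightarrow> False"
    by (simp add: abs_if split: if_splits)
  show False using gen[OF h1[unfolded e_def] h2[unfolded e_def] eq] .
qed

lemma C1_D:
  assumes "C1 g"
  shows "\<forall>y. (\<lambda>t. g (y + t *\<^sub>R axis i 1)) differentiable (at 0)"
    "continuous_on UNIV (dd (axis i 1) g)"
  using assms unfolding C1_def partial_dd by auto

lemma schwarz_C:
  assumes "C1 g" "C1 (partial i g)" "C1 (partial j g)"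
  shows "partial j (partial i g) = partial i (partial j g)"
proof (intro ext)
  fix x
  show "partial j (partial i g) x = partial i (partial j g) x"
    using assms unfolding partial_dd
    by (intro schwarz C1_D)
qed

lemma sym2:
  assumes "C3 f" shows "partial i (partial j f) = partial j (partial i f)"
  using assms unfolding C3_def by (intro schwarz_C) auto

lemma sym3:
  assumes "C3 f" shows "partial i (partial j (partial k f)) = partial j (partial i (partial k f))"
  using assms unfolding C3_def by (intro schwarz_C) auto

lemma sym3b:
  assumes "C3 f" shows "partial i (partial j (partial k f)) = partial i (partial k (partial j f))"
  using sym2[OF assms, of j k] by simp



lemma vec2_eq: "(x::real^2) = y \<longleftrightarrow> x$1 = y$1 \<and> x$2 = y$2"
  by (simp add: vec_eq_iff forall_2)

lemma lin_indep2_iff: "lin_indep2 a b \<longleftrightarrow> a$1 * b$2 \<noteq> a$2 * b$1"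
proof
  assume L: "lin_indep2 a b"
  show "a$1 * b$2 \<noteq> a$2 * b$1"
  proof
    assume D: "a$1 * b$2 = a$2 * b$1"
    have ab: "a \<noteq> b" "independent {a, b}" using L unfolding lin_indep2_def by auto
    then have b0: "b \<noteq> 0" and nsp: "a \<notin> span {b}"
      using ab by (auto simp: independent_insert)
    show False
    proof (cases "b$1 = 0")
      case True
      then have "b$2 \<noteq> 0" using b0 by (auto simp: vec2_eq)
      then have "a = (a$2 / b$2) *\<^sub>R b" using D True by (simp add: vec2_eq field_simps)
      then show False using nsp by (metis span_base span_scale singletonI)
    next
      case False
      then have "a = (a$1 / b$1) *\<^sub>R b" using D by (simp add: vec2_eq field_simps)
      then show False using nsp by (metis span_base span_scale singletonI)
    qed
  qed
next
  assume D: "a$1 * b$2 \<noteq> a$2 * b$1"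
  have ab: "a \<noteq> b" using D by auto
  have b0: "b \<noteq> 0" using D by auto
  have "a \<notin> span {b}"
  proof
    assume "a \<in> span {b}"
    then obtain k where "a = k *\<^sub>R b" by (auto simp: span_singleton)
    then show False using D by simp
  qed
  then show "lin_indep2 a b" unfolding lin_indep2_def using ab b0 by (simp add: independent_insert)
qed



lemma disc_id:
  fixes x1 y1 x2 y2 x3 y3 :: real
  shows "4*((2*(x1*x2*y3 + x1*y2*x3 + y1*x2*x3))*(6*y1*y2*y3) - (2*(x1*y2*y3+y1*x2*y3+y1*y2*x3))^2)
          *((6*x1*x2*x3)*(2*(x1*y2*y3+y1*x2*y3+y1*y2*x3)) - (2*(x1*x2*y3 + x1*y2*x3 + y1*x2*x3))^2)
        - ((2*(x1*x2*y3 + x1*y2*x3 + y1*x2*x3))*(2*(x1*y2*y3+y1*x2*y3+y1*y2*x3)) - (6*x1*x2*x3)*(6*y1*y2*y3))^2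
      = 48*((x1*y2 - x2*y1)*(x1*y3-x3*y1)*(x2*y3-x3*y2))^2"
  by (simp add: algebra_simps power2_eq_square)

lemma matrix_inv_eq:
  fixes P M :: "real^'n^'n"
  assumes "P ** M = mat 1" "M ** P = mat 1"
  shows "matrix_inv P = M"
proof -
  have "\<exists>A'. P ** A' = mat 1 \<and> A' ** P = mat 1" using assms by blast
  then have N: "P ** matrix_inv P = mat 1" "matrix_inv P ** P = mat 1"
    unfolding matrix_inv_def by (metis (mono_tags, lifting) someI_ex)+
  have "matrix_inv P = matrix_inv P ** (P ** M)" using assms by (simp add: matrix_mul_rid)
  also have "\<dots> = (matrix_inv P ** P) ** M" by (simp add: matrix_mul_assoc)
  also have "\<dots> = M" using N by (simp add: matrix_mul_lid)
  finally show ?thesis .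
qed



lemma inner2: "(u::real^2) \<bullet> y = u$1 * y$1 + u$2 * y$2"
  by (simp add: inner_vec_def sum_2)

lemma mat2_eq: "(A::real^2^2) = B \<longleftrightarrow> A$1$1 = B$1$1 \<and> A$1$2 = B$1$2 \<and> A$2$1 = B$2$1 \<and> A$2$2 = B$2$2"
  by (simp add: vec_eq_iff forall_2)

lemma mmult2: "((A::real^2^2) ** B)$i$j = A$i$1 * B$1$j + A$i$2 * B$2$j"
  by (simp add: matrix_matrix_mult_def sum_2)

lemma Qmat_expl:
  fixes t r :: real
  assumes t: "t > 0"
  defines "P \<equiv> vector [vector [1/t, 0], vector [-r/t, t]] :: real^2^2"
  shows "det P = 1" "(Qmat P)$1$1 = t^2" "(Qmat P)$1$2 = r" "(Qmat P)$2$1 = r"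
    "(Qmat P)$2$2 = (r^2 + 1)/t^2"
proof -
  define M where "M = (vector [vector [t, 0], vector [r/t, 1/t]] :: real^2^2)"
  have "P ** M = mat 1" "M ** P = mat 1"
    unfolding mat2_eq mmult2 P_def M_def using t by (simp_all add: mat_def field_simps)
  then have MI: "matrix_inv P = M" by (rule matrix_inv_eq)
  show "det P = 1" unfolding det_2 P_def using t by simp
  show "(Qmat P)$1$1 = t^2" "(Qmat P)$1$2 = r" "(Qmat P)$2$1 = r"
    "(Qmat P)$2$2 = (r^2 + 1)/t^2"
    unfolding Qmat_def MI mmult2 M_def using t
    by (simp_all add: transpose_def field_simps power2_eq_square)
qed

lemma algY:
  fixes a b c d :: real and a1 a2 a3 :: "real^2"
  assumes cub: "\<forall>y::real^2. (a*y$1^3 + 3*b*y$1^2*y$2 + 3*c*y$1*y$2^2 + d*y$2^3)/6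
                 = (a1 \<bullet> y)*(a2 \<bullet> y)*(a3 \<bullet> y)"
    and i12: "lin_indep2 a1 a2" and i13: "lin_indep2 a1 a3" and i23: "lin_indep2 a2 a3"
  shows "\<exists>P::real^2^2. \<bar>det P\<bar> = 1 \<and>
     (Qmat P)$1$1*a + ((Qmat P)$1$2+(Qmat P)$2$1)*b + (Qmat P)$2$2*c = 0 \<and>
     (Qmat P)$1$1*b + ((Qmat P)$1$2+(Qmat P)$2$1)*c + (Qmat P)$2$2*d = 0"
proof -
  define x1 where "x1 = a1$1" define y1 where "y1 = a1$2"
  define x2 where "x2 = a2$1" define y2 where "y2 = a2$2"
  define x3 where "x3 = a3$1" define y3 where "y3 = a3$2"
  have e1: "a/6 = x1*x2*x3" using cub[rule_format, of "vector [1,0]"]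
    by (simp add: inner2 x1_def x2_def x3_def)
  have e2: "d/6 = y1*y2*y3" using cub[rule_format, of "vector [0,1]"]
    by (simp add: inner2 y1_def y2_def y3_def)
  have e3: "(a + 3*b + 3*c + d)/6 = (x1+y1)*(x2+y2)*(x3+y3)" using cub[rule_format, of "vector [1,1]"]
    by (simp add: inner2 x1_def x2_def x3_def y1_def y2_def y3_def)
  have e4: "(a - 3*b + 3*c - d)/6 = (x1-y1)*(x2-y2)*(x3-y3)" using cub[rule_format, of "vector [1,-1]"]
    by (simp add: inner2 x1_def x2_def x3_def y1_def y2_def y3_def)
  have ea: "a = 6*x1*x2*x3" using e1 by simp
  have ed: "d = 6*y1*y2*y3" using e2 by simp
  have E3: "a + 3*b + 3*c + d = 6*((x1+y1)*(x2+y2)*(x3+y3))" using e3 by simp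
  have E4: "a - 3*b + 3*c - d = 6*((x1-y1)*(x2-y2)*(x3-y3))" using e4 by simp
  have "b = ((x1+y1)*(x2+y2)*(x3+y3)) - ((x1-y1)*(x2-y2)*(x3-y3)) - d/3"
    using E3 E4 by linarith
  then have eb: "b = 2*(x1*x2*y3 + x1*y2*x3 + y1*x2*x3)" using ed by (simp add: algebra_simps)
  have "c = ((x1+y1)*(x2+y2)*(x3+y3)) + ((x1-y1)*(x2-y2)*(x3-y3)) - a/3"
    using E3 E4 by linarith
  then have ec: "c = 2*(x1*y2*y3+y1*x2*y3+y1*y2*x3)" using ea by (simp add: algebra_simps)
  have nz: "(x1*y2 - x2*y1)*(x1*y3-x3*y1)*(x2*y3-x3*y2) \<noteq> 0"
    using i12 i13 i23 unfolding lin_indep2_iff x1_def x2_def x3_def y1_def y2_def y3_def by auto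
  define p0 where "p0 = b*d - c^2"
  define r0 where "r0 = (b*c - a*d)/2"
  define w0 where "w0 = a*c - b^2"
  have "4*(p0*w0 - r0^2) = 48*((x1*y2 - x2*y1)*(x1*y3-x3*y1)*(x2*y3-x3*y2))^2"
    unfolding p0_def r0_def w0_def ea eb ec ed disc_id[symmetric]
    by (simp add: power2_eq_square field_simps)
  moreover have "((x1*y2 - x2*y1)*(x1*y3-x3*y1)*(x2*y3-x3*y2))^2 > 0" using nz by simp
  moreover have gen: "\<And>D Z::real. 4*D = 48*Z \<Longrightarrow> Z > 0 \<Longrightarrow> D > 0" by linarith
  ultimately have D0: "p0*w0 - r0^2 > 0" by blast
  then have p0nz: "p0 \<noteq> 0" by (smt (verit) mult_eq_0_iff zero_le_power2)
  define k where "k = sgn p0 / sqrt (p0*w0 - r0^2)"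
  define p where "p = k*p0" define r where "r = k*r0" define w where "w = k*w0"
  have kk: "k^2 * (p0*w0 - r0^2) = 1" unfolding k_def using D0 p0nz
    by (simp add: power_divide sgn_if)
  have pp: "p > 0" unfolding p_def k_def using D0 p0nz by (simp add: sgn_if field_simps)
  have ps: "p*w - r^2 = 1" using kk unfolding p_def r_def w_def by (simp add: algebra_simps power2_eq_square)
  define t where "t = sqrt p"
  have t: "t > 0" "t^2 = p" unfolding t_def using pp by simp_all
  define P where "P = (vector [vector [1/t, 0], vector [-r/t, t]] :: real^2^2)"
  note Q = Qmat_expl[OF t(1), of r, folded P_def]
  have w': "(r^2 + 1)/t^2 = w" using ps t pp by (simp add: field_simps)
  have v1: "p0*a + 2*r0*b + w0*c = 0" unfolding p0_def r0_def w0_def by (simp add: field_simps power2_eq_square)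
  have v2: "p0*b + 2*r0*c + w0*d = 0" unfolding p0_def r0_def w0_def by (simp add: field_simps power2_eq_square)
  have q11: "(Qmat P)$1$1 = p" using Q(2) t(2) by simp
  have q22: "(Qmat P)$2$2 = w" using Q(5) w' by simp
  show ?thesis
  proof (intro exI[of _ P] conjI)
    show "\<bar>det P\<bar> = 1" using Q by simp
    show "(Qmat P)$1$1*a + ((Qmat P)$1$2+(Qmat P)$2$1)*b + (Qmat P)$2$2*c = 0"
    proof -
      have "p*a + (r+r)*b + w*c = k*(p0*a + 2*r0*b + w0*c)" unfolding p_def r_def w_def by (simp add: algebra_simps)
      then show ?thesis unfolding q11 q22 Q(3) Q(4) using v1 by simp
    qed
    show "(Qmat P)$1$1*b + ((Qmat P)$1$2+(Qmat P)$2$1)*c + (Qmat P)$2$2*d = 0"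
    proof -
      have "p*b + (r+r)*c + w*d = k*(p0*b + 2*r0*c + w0*d)" unfolding p_def r_def w_def by (simp add: algebra_simps)
      then show ?thesis unfolding q11 q22 Q(3) Q(4) using v2 by simp
    qed
  qed
qed



lemma key_identity:
  fixes a b c d m11 m12 m21 m22 z1 z2 :: real
  shows "a*(m11*z1 + m12*z2)^3 + 3*b*(m11*z1+m12*z2)^2*(m21*z1+m22*z2) + 3*c*(m11*z1+m12*z2)*(m21*z1+m22*z2)^2 + d*(m21*z1+m22*z2)^3
  = (a*m11^3 + 3*b*m11^2*m21 + 3*c*m11*m21^2 + d*m21^3)*(z1^3 - 3*z1*z2^2)
    - (a*m12^3 + 3*b*m12^2*m22 + 3*c*m12*m22^2 + d*m22^3)*(3*z1^2*z2 - z2^3)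
    + 3*(m12*((m11^2+m12^2)*a + 2*(m11*m21+m12*m22)*b + (m21^2+m22^2)*c)
       + m22*((m11^2+m12^2)*b + 2*(m11*m21+m12*m22)*c + (m21^2+m22^2)*d))*z1^2*z2
    + 3*(m11*((m11^2+m12^2)*a + 2*(m11*m21+m12*m22)*b + (m21^2+m22^2)*c)
       + m21*((m11^2+m12^2)*b + 2*(m11*m21+m12*m22)*c + (m21^2+m22^2)*d))*z1*z2^2"
  by (simp add: algebra_simps power2_eq_square power3_eq_cube)

lemma cube_root2:
  fixes A D :: real
  shows "\<exists>\<rho> \<sigma>. \<rho>^3 - 3*\<rho>*\<sigma>^2 = A \<and> 3*\<rho>^2*\<sigma> - \<sigma>^3 = D"
proof -
  define \<kappa> where "\<kappa> = Complex A D"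
  define \<omega> where "\<omega> = rcis (root 3 (cmod \<kappa>)) (Arg \<kappa> / 3)"
  have "\<omega>^3 = rcis (root 3 (cmod \<kappa>) ^ 3) (real 3 * (Arg \<kappa> / 3))"
    unfolding \<omega>_def by (rule DeMoivre2)
  also have "\<dots> = \<kappa>" by (simp add: rcis_cmod_Arg)
  finally have w3: "\<omega>^3 = \<kappa>" .
  define \<rho> where "\<rho> = Re \<omega>" define \<sigma> where "\<sigma> = Im \<omega>"
  have "\<omega> = Complex \<rho> \<sigma>" unfolding \<rho>_def \<sigma>_def by simp
  then have "\<omega>^3 = Complex (\<rho>^3 - 3*\<rho>*\<sigma>^2) (3*\<rho>^2*\<sigma> - \<sigma>^3)"
    by (simp add: power3_eq_cube complex_eq_iff power2_eq_square algebra_simps)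
  then show ?thesis using w3 unfolding \<kappa>_def by auto
qed

lemma inv_both:
  fixes P :: "real^'n^'n"
  assumes "invertible P"
  shows "P ** matrix_inv P = mat 1" "matrix_inv P ** P = mat 1"
proof -
  have "\<exists>A'. P ** A' = mat 1 \<and> A' ** P = mat 1" using assms unfolding invertible_def by blast
  then show "P ** matrix_inv P = mat 1" "matrix_inv P ** P = mat 1"
    unfolding matrix_inv_def by (metis (mono_tags, lifting) someI_ex)+
qed

lemma ne_by_diff: "(x::real) - y = k * e \<Longrightarrow> k \<noteq> 0 \<Longrightarrow> e \<noteq> 0 \<Longrightarrow> x \<noteq> y" by auto

lemma algX:
  fixes a b c d :: real and P :: "real^2^2"
  assumes detP: "det P \<noteq> 0"
    and v1: "(Qmat P)$1$1*a + ((Qmat P)$1$2+(Qmat P)$2$1)*b + (Qmat P)$2$2*c = 0"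
    and v2: "(Qmat P)$1$1*b + ((Qmat P)$1$2+(Qmat P)$2$1)*c + (Qmat P)$2$2*d = 0"
    and nz: "\<not> (\<forall>y::real^2. (a*y$1^3 + 3*b*y$1^2*y$2 + 3*c*y$1*y$2^2 + d*y$2^3)/6 = 0)"
  shows "\<exists>a1 a2 a3. lin_indep2 a1 a2 \<and> lin_indep2 a1 a3 \<and> lin_indep2 a2 a3 \<and>
    (\<forall>y::real^2. (a*y$1^3 + 3*b*y$1^2*y$2 + 3*c*y$1*y$2^2 + d*y$2^3)/6 = (a1 \<bullet> y)*(a2 \<bullet> y)*(a3 \<bullet> y))"
proof -
  define M where "M = matrix_inv P"
  have MP: "M ** P = mat 1" using inv_both(2)[of P] detP unfolding M_def invertible_det_nz by blast
  define m11 where "m11 = M$1$1" define m12 where "m12 = M$1$2"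
  define m21 where "m21 = M$2$1" define m22 where "m22 = M$2$2"
  define p11 where "p11 = P$1$1" define p12 where "p12 = P$1$2"
  define p21 where "p21 = P$2$1" define p22 where "p22 = P$2$2"
  have mp: "m11*p11 + m12*p21 = 1" "m11*p12 + m12*p22 = 0" "m21*p11 + m22*p21 = 0" "m21*p12 + m22*p22 = 1"
    using MP unfolding mat2_eq mmult2 by (auto simp: mat_def m11_def m12_def m21_def m22_def p11_def p12_def p21_def p22_def)
  have Qe: "(Qmat P)$1$1 = m11^2+m12^2" "(Qmat P)$1$2 = m11*m21+m12*m22" "(Qmat P)$2$1 = m11*m21+m12*m22"
    "(Qmat P)$2$2 = m21^2+m22^2"
    unfolding Qmat_def mmult2 M_def[symmetric] m11_def m12_def m21_def m22_def
    by (simp_all add: transpose_def power2_eq_square algebra_simps)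
  have V1: "(m11^2+m12^2)*a + 2*(m11*m21+m12*m22)*b + (m21^2+m22^2)*c = 0" using v1 unfolding Qe by simp
  have V2: "(m11^2+m12^2)*b + 2*(m11*m21+m12*m22)*c + (m21^2+m22^2)*d = 0" using v2 unfolding Qe by simp
  define At where "At = a*m11^3 + 3*b*m11^2*m21 + 3*c*m11*m21^2 + d*m21^3"
  define Dt where "Dt = a*m12^3 + 3*b*m12^2*m22 + 3*c*m12*m22^2 + d*m22^3"
  define C where "C y = (a*y$1^3 + 3*b*y$1^2*y$2 + 3*c*y$1*y$2^2 + d*y$2^3)/6" for y :: "real^2"
  have Cz: "6 * C y = At*((p11*y$1+p12*y$2)^3 - 3*(p11*y$1+p12*y$2)*(p21*y$1+p22*y$2)^2)
         - Dt*(3*(p11*y$1+p12*y$2)^2*(p21*y$1+p22*y$2) - (p21*y$1+p22*y$2)^3)" for y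
  proof -
    define z1 where "z1 = p11*y$1+p12*y$2"
    define z2 where "z2 = p21*y$1+p22*y$2"
    have "m11*z1 + m12*z2 = (m11*p11 + m12*p21)*y$1 + (m11*p12 + m12*p22)*y$2"
      unfolding z1_def z2_def by (simp add: algebra_simps)
    then have y1: "y$1 = m11*z1 + m12*z2" using mp by simp
    have "m21*z1 + m22*z2 = (m21*p11 + m22*p21)*y$1 + (m21*p12 + m22*p22)*y$2"
      unfolding z1_def z2_def by (simp add: algebra_simps)
    then have y2: "y$2 = m21*z1 + m22*z2" using mp by simp
    have "6 * C y = a*y$1^3 + 3*b*y$1^2*y$2 + 3*c*y$1*y$2^2 + d*y$2^3" unfolding C_def by simp
    also have "\<dots> = At*(z1^3 - 3*z1*z2^2) - Dt*(3*z1^2*z2 - z2^3)"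
      unfolding y1 y2 key_identity V1 V2 At_def Dt_def by simp
    finally show ?thesis unfolding z1_def z2_def .
  qed
  have AD: "At \<noteq> 0 \<or> Dt \<noteq> 0"
  proof (rule ccontr)
    assume "\<not> (At \<noteq> 0 \<or> Dt \<noteq> 0)"
    then have "\<forall>y. C y = 0" using Cz by simp
    then show False using nz unfolding C_def by simp
  qed
  obtain \<rho> \<sigma> where rs: "\<rho>^3 - 3*\<rho>*\<sigma>^2 = At" "3*\<rho>^2*\<sigma> - \<sigma>^3 = Dt"
    using cube_root2 by blast
  have rs0: "\<rho>^2 + \<sigma>^2 \<noteq> 0"
  proof
    assume "\<rho>^2 + \<sigma>^2 = 0"
    then have "\<rho> = 0" "\<sigma> = 0" by (simp_all add: sum_power2_eq_zero_iff)
    then show False using rs AD by simp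
  qed
  define \<alpha> where "\<alpha> = (vector [\<rho>*p11 - \<sigma>*p21, \<rho>*p12 - \<sigma>*p22] :: real^2)"
  define \<beta> where "\<beta> = (vector [\<sigma>*p11 + \<rho>*p21, \<sigma>*p12 + \<rho>*p22] :: real^2)"
  have dab: "\<alpha>$1 * \<beta>$2 - \<alpha>$2 * \<beta>$1 = (\<rho>^2 + \<sigma>^2) * det P"
    unfolding \<alpha>_def \<beta>_def det_2 p11_def p12_def p21_def p22_def
    by (simp add: algebra_simps power2_eq_square)
  have dnz: "\<alpha>$1 * \<beta>$2 - \<alpha>$2 * \<beta>$1 \<noteq> 0" using dab rs0 detP by simp
  define rt3 where "rt3 = sqrt 3"
  have rt3: "rt3^2 = 3" "rt3 > 0" unfolding rt3_def by simp_all
  define a1 where "a1 = (1/6) *\<^sub>R \<alpha>"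
  define a2 where "a2 = \<alpha> - rt3 *\<^sub>R \<beta>"
  define a3 where "a3 = \<alpha> + rt3 *\<^sub>R \<beta>"
  have i12: "lin_indep2 a1 a2" unfolding lin_indep2_iff a1_def a2_def
  proof -
    have "(1/6 * \<alpha>$1) * (\<alpha>$2 - rt3 * \<beta>$2) - (1/6 * \<alpha>$2) * (\<alpha>$1 - rt3 * \<beta>$1)
        = - (rt3/6) * (\<alpha>$1 * \<beta>$2 - \<alpha>$2 * \<beta>$1)" by (simp add: field_simps)
    then show "((1/6) *\<^sub>R \<alpha>)$1 * (\<alpha> - rt3 *\<^sub>R \<beta>)$2 \<noteq> ((1/6) *\<^sub>R \<alpha>)$2 * (\<alpha> - rt3 *\<^sub>R \<beta>)$1"
      unfolding vector_scaleR_component vector_minus_component vector_add_component real_scaleR_def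
      by (rule ne_by_diff) (use dnz rt3 in auto)
  qed
  have i13: "lin_indep2 a1 a3" unfolding lin_indep2_iff a1_def a3_def
  proof -
    have "(1/6 * \<alpha>$1) * (\<alpha>$2 + rt3 * \<beta>$2) - (1/6 * \<alpha>$2) * (\<alpha>$1 + rt3 * \<beta>$1)
        = (rt3/6) * (\<alpha>$1 * \<beta>$2 - \<alpha>$2 * \<beta>$1)" by (simp add: field_simps)
    then show "((1/6) *\<^sub>R \<alpha>)$1 * (\<alpha> + rt3 *\<^sub>R \<beta>)$2 \<noteq> ((1/6) *\<^sub>R \<alpha>)$2 * (\<alpha> + rt3 *\<^sub>R \<beta>)$1"
      unfolding vector_scaleR_component vector_minus_component vector_add_component real_scaleR_def
      by (rule ne_by_diff) (use dnz rt3 in auto)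
  qed
  have i23: "lin_indep2 a2 a3" unfolding lin_indep2_iff a2_def a3_def
  proof -
    have "(\<alpha>$1 - rt3 * \<beta>$1) * (\<alpha>$2 + rt3 * \<beta>$2) - (\<alpha>$2 - rt3 * \<beta>$2) * (\<alpha>$1 + rt3 * \<beta>$1)
        = (2*rt3) * (\<alpha>$1 * \<beta>$2 - \<alpha>$2 * \<beta>$1)" by (simp add: algebra_simps)
    then show "(\<alpha> - rt3 *\<^sub>R \<beta>)$1 * (\<alpha> + rt3 *\<^sub>R \<beta>)$2 \<noteq> (\<alpha> - rt3 *\<^sub>R \<beta>)$2 * (\<alpha> + rt3 *\<^sub>R \<beta>)$1"
      unfolding vector_scaleR_component vector_minus_component vector_add_component real_scaleR_def
      by (rule ne_by_diff) (use dnz rt3 in auto)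
  qed
  have fac: "C y = (a1 \<bullet> y)*(a2 \<bullet> y)*(a3 \<bullet> y)" for y
  proof -
    define z1 where "z1 = p11*y$1+p12*y$2"
    define z2 where "z2 = p21*y$1+p22*y$2"
    define X where "X = \<rho>*z1 - \<sigma>*z2"
    define Y where "Y = \<sigma>*z1 + \<rho>*z2"
    have aX: "\<alpha> \<bullet> y = X" unfolding inner2 \<alpha>_def X_def z1_def z2_def by (simp add: algebra_simps)
    have bY: "\<beta> \<bullet> y = Y" unfolding inner2 \<beta>_def Y_def z1_def z2_def by (simp add: algebra_simps)
    have "6 * C y = At*(z1^3 - 3*z1*z2^2) - Dt*(3*z1^2*z2 - z2^3)"
      using Cz[of y] unfolding z1_def z2_def .
    also have "\<dots> = X^3 - 3*X*Y^2" unfolding rs[symmetric] X_def Y_def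
      by (simp add: algebra_simps power2_eq_square power3_eq_cube)
    also have "\<dots> = X * (X - rt3*Y) * (X + rt3*Y)" using rt3(1)
      by (simp add: algebra_simps power2_eq_square power3_eq_cube)
    finally have "C y = (X/6) * (X - rt3*Y) * (X + rt3*Y)" by simp
    then show ?thesis unfolding a1_def a2_def a3_def inner_diff_left inner_add_left inner_scaleR_left aX bY
      by simp
  qed
  show ?thesis using i12 i13 i23 fac unfolding C_def by blast
qed


lemma cubic_zero:
  fixes a b c d :: real
  assumes "\<forall>y::real^2. (a*y$1^3 + 3*b*y$1^2*y$2 + 3*c*y$1*y$2^2 + d*y$2^3)/6 = 0"
  shows "a = 0 \<and> b = 0 \<and> c = 0 \<and> d = 0"
proof -
  have e1: "a = 0" using assms[rule_format, of "vector [1,0]"] by simp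
  have e2: "d = 0" using assms[rule_format, of "vector [0,1]"] by simp
  have e3: "a + 3*b + 3*c + d = 0" using assms[rule_format, of "vector [1,1]"] by simp
  have e4: "a - 3*b + 3*c - d = 0" using assms[rule_format, of "vector [1,-1]"] by simp
  show ?thesis using e1 e2 e3 e4 by linarith
qed

lemma AB_zero_iff:
  assumes H: "invertible (hess f th)" and h: "h > 0" and B: "Bdq 2 2 G \<noteq> 0"
  shows "AB f th G h P = 0 \<longleftrightarrow> grad_QLap (Qmat P) f th = 0"
proof -
  define c0 where "c0 = - (pi powr (real 2 / 2) * h ^ 2 /
                 (2 powr (real 2 - 1) * Gamma ((real 2 + real 2) / 2) * Gamma (real 2 / 2 + 1)))"
  have g2: "Gamma (2::real) > 0" by (rule Gamma_real_pos) simp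
  then have g2': "Gamma (2::real) \<noteq> 0" by linarith
  have c0: "c0 \<noteq> 0" unfolding c0_def using h g2' by simp
  have AB: "AB f th G h P = (c0 * Bdq 2 2 G) *\<^sub>R (matrix_inv (hess f th) *v grad_QLap (Qmat P) f th)"
    unfolding AB_def c0_def Let_def by simp
  define g where "g = grad_QLap (Qmat P) f th"
  have "matrix_inv (hess f th) *v g = 0 \<longleftrightarrow> g = 0"
  proof
    assume "matrix_inv (hess f th) *v g = 0"
    then have "hess f th *v (matrix_inv (hess f th) *v g) = 0" by simp
    then show "g = 0" using inv_both(1)[OF H] by (simp add: matrix_vector_mul_assoc)
  qed simp
  then show ?thesis unfolding AB g_def using c0 B by simp
qed

theorem proposition6:
  fixes f :: "real^2 \<Rightarrow> real" and th :: "real^2"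
    and G :: "real \<Rightarrow> real" and h :: real
  assumes smooth: "C3 f"
    and nonneg: "\<forall>x. 0 \<le> f x"
    and integrable: "f integrable_on UNIV"
    and density: "integral UNIV f = 1"
    and mode: "\<forall>x. x \<noteq> th \<longrightarrow> f x < f th"
    and hess_nonsing: "invertible (hess f th)"
    and G_int: "(\<lambda>x. x ^ 3 * G x) integrable_on {0..}"
    and B_nz: "Bdq 2 2 G \<noteq> 0"
    and h_pos: "h > 0"
  shows
    "((\<forall>x. taylor3 f th x = 0) \<longrightarrow>
        (\<forall>P. \<bar>det P\<bar> = 1 \<longrightarrow> AB f th G h P = 0))
   \<and> ((\<exists>a1 a2 a3. lin_indep2 a1 a2 \<and> lin_indep2 a1 a3 \<and> lin_indep2 a2 a3 \<and>
          (\<forall>x. taylor3 f th x = (a1 \<bullet> (x - th)) * (a2 \<bullet> (x - th)) * (a3 \<bullet> (x - th)))) \<longrightarrow>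
        (\<exists>P. \<bar>det P\<bar> = 1 \<and> AB f th G h P = 0))
   \<and> ((\<not> (\<forall>x. taylor3 f th x = 0) \<and>
        \<not> (\<exists>a1 a2 a3. lin_indep2 a1 a2 \<and> lin_indep2 a1 a3 \<and> lin_indep2 a2 a3 \<and>
          (\<forall>x. taylor3 f th x = (a1 \<bullet> (x - th)) * (a2 \<bullet> (x - th)) * (a3 \<bullet> (x - th))))) \<longrightarrow>
        (\<forall>P. \<bar>det P\<bar> = 1 \<longrightarrow> AB f th G h P \<noteq> 0))"
proof -
  define a where "a = partial 1 (partial 1 (partial 1 f)) th"
  define b where "b = partial 1 (partial 1 (partial 2 f)) th"
  define c where "c = partial 1 (partial 2 (partial 2 f)) th"
  define d where "d = partial 2 (partial 2 (partial 2 f)) th"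
  have t121: "partial 1 (partial 2 (partial 1 f)) th = b"
    unfolding b_def using sym3b[OF smooth, of 1 2 1] by simp
  have t211: "partial 2 (partial 1 (partial 1 f)) th = b"
    using sym3[OF smooth, of 2 1 1] t121 by simp
  have t212: "partial 2 (partial 1 (partial 2 f)) th = c"
    unfolding c_def using sym3[OF smooth, of 2 1 2] by simp
  have t221: "partial 2 (partial 2 (partial 1 f)) th = c"
    using sym3b[OF smooth, of 2 2 1] t212 by simp
  define C where "C y = (a*y$1^3 + 3*b*y$1^2*y$2 + 3*c*y$1*y$2^2 + d*y$2^3)/6" for y :: "real^2"
  have tay: "taylor3 f th x = C (x - th)" for x
    unfolding taylor3_def C_def sum_2
    by (simp add: t121 t211 t212 t221 a_def[symmetric] b_def[symmetric] c_def[symmetric]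
        d_def[symmetric] algebra_simps power2_eq_square power3_eq_cube)
  have grad: "grad_QLap Q f th = 0 \<longleftrightarrow>
     Q$1$1*a + (Q$1$2+Q$2$1)*b + Q$2$2*c = 0 \<and> Q$1$1*b + (Q$1$2+Q$2$1)*c + Q$2$2*d = 0" for Q
    unfolding grad_QLap_def vec_eq_iff forall_2 sum_2
    by (simp add: t121 t211 t212 t221 a_def[symmetric] b_def[symmetric] c_def[symmetric]
        d_def[symmetric] algebra_simps)
  note ABz = AB_zero_iff[OF hess_nonsing h_pos B_nz]
  have tayC: "(\<forall>x. taylor3 f th x = 0) \<longleftrightarrow> (\<forall>y. C y = 0)"
    unfolding tay by (metis add_diff_cancel_right')
  have tayF: "(\<forall>x. taylor3 f th x = (a1 \<bullet> (x - th)) * (a2 \<bullet> (x - th)) * (a3 \<bullet> (x - th)))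
     \<longleftrightarrow> (\<forall>y. C y = (a1 \<bullet> y) * (a2 \<bullet> y) * (a3 \<bullet> y))" for a1 a2 a3
    unfolding tay by (metis add_diff_cancel_right')
  show ?thesis
  proof (intro conjI impI allI)
    fix P :: "real^2^2"
    assume "\<forall>x. taylor3 f th x = 0"
    then have "a = 0 \<and> b = 0 \<and> c = 0 \<and> d = 0" using cubic_zero unfolding tayC C_def by blast
    then show "AB f th G h P = 0" unfolding ABz grad by simp
  next
    assume "\<exists>a1 a2 a3. lin_indep2 a1 a2 \<and> lin_indep2 a1 a3 \<and> lin_indep2 a2 a3 \<and>
          (\<forall>x. taylor3 f th x = (a1 \<bullet> (x - th)) * (a2 \<bullet> (x - th)) * (a3 \<bullet> (x - th)))"
    then obtain a1 a2 a3 where L: "lin_indep2 a1 a2" "lin_indep2 a1 a3" "lin_indep2 a2 a3"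
      "\<forall>y. C y = (a1 \<bullet> y) * (a2 \<bullet> y) * (a3 \<bullet> y)" unfolding tayF by blast
    obtain P :: "real^2^2" where "\<bar>det P\<bar> = 1"
      "(Qmat P)$1$1*a + ((Qmat P)$1$2+(Qmat P)$2$1)*b + (Qmat P)$2$2*c = 0"
      "(Qmat P)$1$1*b + ((Qmat P)$1$2+(Qmat P)$2$1)*c + (Qmat P)$2$2*d = 0"
      using algY[OF L(4)[unfolded C_def] L(1-3)] by blast
    then show "\<exists>P. \<bar>det P\<bar> = 1 \<and> AB f th G h P = 0" unfolding ABz grad by blast
  next
    fix P :: "real^2^2"
    assume N: "\<not> (\<forall>x. taylor3 f th x = 0) \<and>
        \<not> (\<exists>a1 a2 a3. lin_indep2 a1 a2 \<and> lin_indep2 a1 a3 \<and> lin_indep2 a2 a3 \<and>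
          (\<forall>x. taylor3 f th x = (a1 \<bullet> (x - th)) * (a2 \<bullet> (x - th)) * (a3 \<bullet> (x - th))))"
      and dP: "\<bar>det P\<bar> = 1"
    show "AB f th G h P \<noteq> 0"
    proof
      assume "AB f th G h P = 0"
      then have v: "(Qmat P)$1$1*a + ((Qmat P)$1$2+(Qmat P)$2$1)*b + (Qmat P)$2$2*c = 0"
        "(Qmat P)$1$1*b + ((Qmat P)$1$2+(Qmat P)$2$1)*c + (Qmat P)$2$2*d = 0"
        unfolding ABz grad by blast+
      have dP0: "det P \<noteq> 0" using dP by auto
      have "\<not> (\<forall>y. C y = 0)" using N unfolding tayC by blast
      from algX[OF dP0 v this[unfolded C_def]] obtain a1 a2 a3 where
        "lin_indep2 a1 a2" "lin_indep2 a1 a3" "lin_indep2 a2 a3"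
        "\<forall>y. C y = (a1 \<bullet> y) * (a2 \<bullet> y) * (a3 \<bullet> y)" unfolding C_def by blast
      then show False using N unfolding tayF by blast
    qed
  qed
qed

end
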